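(* Let $Y$ be a real Hilbert space, let $\mu>0$, and let $Q\colon Y\rightrightarrows Y$ be $\mu$-unmonotone with domain $D(Q)=Y$. Suppose also that $-Q-\mu\mathbb{I}_Y$ is maximally monotone. Then $Q$ touches every maximally monotone multifunction on $Y$; that is, for every maximally monotone $M\colon Y\rightrightarrows Y$, the set $G(M)\cap G(Q)$ is a singleton in $Y\times Y$.
   Context: For a multifunction $Q\colon Y\rightrightarrows Y$, $G(Q)=\{(y,q): q\in Qy\}$ is its graph and $D(Q)=\{y: Qy\neq\emptyset\}$ its domain. For $\mu>0$, $Q$ is $\mu$-unmonotone if for all $(y_1,q_1),(y_2,q_2)\in G(Q)$, $\langle y_1-y_2,q_1-q_2\rangle+\mu\|(y_1-y_2,q_1-q_2)\|^2\le 0$, where $\|(a,b)\|^2=\|a\|^2+\|b\|^2$. Two multifunctions $M,Q$ on $Y$ touch if $G(M)\cap G(Q)$ is a singleton. $\mathbb{I}_Y$ is the identity on $Y$ and $-Q-\mu\mathbb{I}_Y$ is the multifunction $y\mapsto\{-q-\mu y: q\in Qy\}$. *)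

theory Defs
  imports "HOL-Analysis.Analysis"
begin

definition graph :: "('a \<Rightarrow> 'a set) \<Rightarrow> ('a \<times> 'a) set" where
  "graph Q = {(y, q). q \<in> Q y}"

definition dom_mf :: "('a \<Rightarrow> 'a set) \<Rightarrow> 'a set" where
  "dom_mf Q = {y. Q y \<noteq> {}}"

definition monotone_mf :: "('a::real_inner \<Rightarrow> 'a set) \<Rightarrow> bool" where
  "monotone_mf M \<longleftrightarrow>
     (\<forall>(y1, q1) \<in> graph M. \<forall>(y2, q2) \<in> graph M. inner (y1 - y2) (q1 - q2) \<ge> 0)"

definition max_monotone_mf :: "('a::real_inner \<Rightarrow> 'a set) \<Rightarrow> bool" where
  "max_monotone_mf M \<longleftrightarrow> monotone_mf M \<and>
     (\<forall>M'. monotone_mf M' \<and> graph M \<subseteq> graph M' \<longrightarrow> graph M' = graph M)"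

definition unmonotone_mf :: "real \<Rightarrow> ('a::real_inner \<Rightarrow> 'a set) \<Rightarrow> bool" where
  "unmonotone_mf \<mu> Q \<longleftrightarrow>
     (\<forall>(y1, q1) \<in> graph Q. \<forall>(y2, q2) \<in> graph Q.
        inner (y1 - y2) (q1 - q2) + \<mu> * ((norm (y1 - y2))\<^sup>2 + (norm (q1 - q2))\<^sup>2) \<le> 0)"

definition touches :: "('a \<Rightarrow> 'a set) \<Rightarrow> ('a \<Rightarrow> 'a set) \<Rightarrow> bool" where
  "touches M Q \<longleftrightarrow> (\<exists>p. graph M \<inter> graph Q = {p})"

definition neg_shift :: "real \<Rightarrow> ('a::real_vector \<Rightarrow> 'a set) \<Rightarrow> ('a \<Rightarrow> 'a set)" where
  "neg_shift \<mu> Q = (\<lambda>y. (\<lambda>q. - q - \<mu> *\<^sub>R y) ` Q y)"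

end

theory Submission
  imports Defs
begin


lemma max_ext:
  fixes A :: "'a::real_inner \<Rightarrow> 'a set"
  assumes mm: "max_monotone_mf A" and rel: "\<forall>a b. b \<in> A a \<longrightarrow> inner (x - a) (u - b) \<ge> 0"
  shows "u \<in> A x"
proof -
  define A' where "A' = (\<lambda>y. if y = x then insert u (A y) else A y)"
  have g: "graph A' = insert (x,u) (graph A)"
    by (auto simp: graph_def A'_def split: if_splits)
  have mA: "monotone_mf A" using mm by (simp add: max_monotone_mf_def)
  have "monotone_mf A'"
    unfolding monotone_mf_def g
  proof (intro ballI, clarify)
    fix y1 q1 y2 q2
    assume h1: "(y1, q1) \<in> insert (x, u) (graph A)" and h2: "(y2, q2) \<in> insert (x, u) (graph A)"
    have sym: "inner (a - x) (b - u) = inner (x - a) (u - b)" for a b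
      by (metis inner_minus_left inner_minus_right minus_diff_eq)
    show "0 \<le> inner (y1 - y2) (q1 - q2)"
      using h1 h2 mA rel sym unfolding monotone_mf_def graph_def by auto
  qed
  then have "graph A' = graph A" using mm g unfolding max_monotone_mf_def by blast
  then show ?thesis using g by (auto simp: graph_def)
qed

lemma max_nonempty:
  fixes A :: "'a::real_inner \<Rightarrow> 'a set"
  assumes mm: "max_monotone_mf A"
  shows "\<exists>a b. b \<in> A a"
  using max_ext[OF mm, of 0 0] by blast

lemma norm_seg:
  fixes p q :: "'a::real_inner"
  shows "(norm ((1-t) *\<^sub>R p + t *\<^sub>R q))\<^sup>2 = (1-t) * (norm p)\<^sup>2 + t * (norm q)\<^sup>2 - t*(1-t) * (norm (p - q))\<^sup>2"
  unfolding power2_norm_eq_inner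
  by (simp add: inner_add_left inner_add_right inner_diff_left inner_diff_right
      inner_commute algebra_simps power2_eq_square)

lemma hull_mono_bound:
  fixes W :: "('a::real_inner \<times> 'a \<times> real) set"
  assumes e: "\<forall>v\<in>W. snd (snd v) = inner (fst v) (fst (snd v))"
  and m: "\<forall>v\<in>W. \<forall>w\<in>W. inner (fst v - fst w) (fst (snd v) - fst (snd w)) \<ge> 0"
  and k: "\<kappa> \<in> convex hull W"
  shows "inner (fst \<kappa>) (fst (snd \<kappa>)) \<le> snd (snd \<kappa>)"
proof -
  obtain S u where S: "finite S" "S \<subseteq> W" "\<forall>x\<in>S. 0 \<le> u x" "sum u S = 1"
    and ks: "(\<Sum>v\<in>S. u v *\<^sub>R v) = \<kappa>"
    using k unfolding convex_hull_explicit by blast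
  define a where "a = (\<lambda>v::('a \<times> 'a \<times> real). fst v)"
  define b where "b = (\<lambda>v::('a \<times> 'a \<times> real). fst (snd v))"
  have A: "fst \<kappa> = (\<Sum>v\<in>S. u v *\<^sub>R a v)" unfolding ks[symmetric] by (simp add: fst_sum a_def)
  have B: "fst (snd \<kappa>) = (\<Sum>v\<in>S. u v *\<^sub>R b v)" unfolding ks[symmetric] by (simp add: snd_sum fst_sum b_def)
  have E: "snd (snd \<kappa>) = (\<Sum>v\<in>S. u v * inner (a v) (b v))"
  proof -
    have "\<forall>v\<in>S. snd (snd v) = inner (a v) (b v)" using e S(2) by (auto simp: a_def b_def)
    then show ?thesis unfolding ks[symmetric] snd_sum by (auto intro!: sum.cong)
  qed
  have sw: "(\<Sum>v\<in>S. u v * (\<Sum>w\<in>S. u w * (a w \<bullet> b v))) = (\<Sum>v\<in>S. u v * (\<Sum>w\<in>S. u w * (a v \<bullet> b w)))"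
    unfolding sum_distrib_left by (subst sum.swap) (simp add: algebra_simps)
  have "0 \<le> (\<Sum>v\<in>S. \<Sum>w\<in>S. u v * u w * inner (a v - a w) (b v - b w))"
    using S m by (auto simp: a_def b_def intro!: sum_nonneg mult_nonneg_nonneg)
  also have "\<dots> = (\<Sum>v\<in>S. \<Sum>w\<in>S. u v * u w * inner (a v) (b v) + u v * u w * inner (a w) (b w)
        - u v * u w * inner (a v) (b w) - u w * u v * inner (a w) (b v))"
    by (simp add: inner_diff_left inner_diff_right algebra_simps)
  also have "\<dots> = 2 * (\<Sum>v\<in>S. u v * inner (a v) (b v)) - 2 * inner (\<Sum>v\<in>S. u v *\<^sub>R a v) (\<Sum>v\<in>S. u v *\<^sub>R b v)"
    by (simp add: sum.distrib sum_subtractf sum_distrib_left[symmetric] sum_distrib_right[symmetric]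
         inner_sum_left inner_sum_right S(4) sw algebra_simps)
  finally show ?thesis using A B E by simp
qed



lemma minty_gen:
  fixes A :: "'a::{real_inner,complete_space} \<Rightarrow> 'a set"
  assumes mm: "max_monotone_mf A" and c: "c > 0"
  shows "\<exists>x. z - c *\<^sub>R x \<in> A x"
proof -
  have mA: "monotone_mf A" using mm by (simp add: max_monotone_mf_def)
  define W where "W = {(a, b - z, inner a (b - z)) | a b. b \<in> A a}"
  define K where "K = convex hull W"
  define P where "P = (\<lambda>\<kappa>::('a\<times>'a\<times>real). fst (snd \<kappa>) - c *\<^sub>R fst \<kappa>)"
  define E where "E = (\<lambda>\<kappa>::('a\<times>'a\<times>real). snd (snd \<kappa>))"
  define g where "g = (\<lambda>\<kappa>. - (norm (P \<kappa>))\<^sup>2 / (4*c) - E \<kappa>)"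
  have We: "\<forall>v\<in>W. snd (snd v) = inner (fst v) (fst (snd v))" by (auto simp: W_def)
  have Wm: "\<forall>v\<in>W. \<forall>w\<in>W. inner (fst v - fst w) (fst (snd v) - fst (snd w)) \<ge> 0"
    using mA unfolding W_def monotone_mf_def graph_def by auto
  have gle0: "g \<kappa> \<le> 0" if "\<kappa> \<in> K" for \<kappa>
  proof -
    have h: "inner (fst \<kappa>) (fst (snd \<kappa>)) \<le> E \<kappa>"
      using hull_mono_bound[OF We Wm] that unfolding K_def E_def by blast
    have id: "(norm (P \<kappa>))\<^sup>2 + 4*c*inner (fst \<kappa>) (fst (snd \<kappa>)) = (norm (fst (snd \<kappa>) + c *\<^sub>R fst \<kappa>))\<^sup>2"
      unfolding P_def power2_norm_eq_inner
      by (simp add: inner_add_left inner_add_right inner_diff_left inner_diff_right inner_commute algebra_simps)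
    have "g \<kappa> \<le> - (norm (P \<kappa>))\<^sup>2 / (4*c) - inner (fst \<kappa>) (fst (snd \<kappa>))"
      unfolding g_def using h by simp
    also have "\<dots> = - ((norm (P \<kappa>))\<^sup>2 + 4*c*inner (fst \<kappa>) (fst (snd \<kappa>))) / (4*c)"
      using c by (simp add: field_simps)
    also have "\<dots> \<le> 0" unfolding id using c by simp
    finally show ?thesis .
  qed
  obtain a0 b0 where "b0 \<in> A a0" using max_nonempty[OF mm] by blast
  then have Wne: "W \<noteq> {}" unfolding W_def by blast
  have WK: "W \<subseteq> K" unfolding K_def by (rule hull_subset)
  have Kne: "K \<noteq> {}" using Wne WK by blast
  have Kc: "convex K" unfolding K_def by simp
  have seg: "g ((1-t) *\<^sub>R k1 + t *\<^sub>R k2) = (1-t) * g k1 + t * g k2 + t*(1-t)*(norm (P k1 - P k2))\<^sup>2/(4*c)"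
    for k1 k2 t
  proof -
    have hP: "P ((1-t) *\<^sub>R k1 + t *\<^sub>R k2) = (1-t) *\<^sub>R P k1 + t *\<^sub>R P k2"
      unfolding P_def by (simp add: algebra_simps)
    have hE: "E ((1-t) *\<^sub>R k1 + t *\<^sub>R k2) = (1-t) * E k1 + t * E k2"
      unfolding E_def by simp
    show ?thesis unfolding g_def hP hE norm_seg using c
      by (simp add: field_simps)
  qed
  define S where "S = Sup (g ` K)"
  have bdd: "bdd_above (g ` K)" using gle0 by (auto intro!: bdd_aboveI)
  have gS: "g \<kappa> \<le> S" if "\<kappa> \<in> K" for \<kappa>
    unfolding S_def using bdd that by (auto intro!: cSup_upper)
  have S0: "S \<le> 0" unfolding S_def using Kne gle0 by (auto intro!: cSup_least)
  have "\<exists>\<kappa>\<in>K. S - inverse (real (Suc n)) < g \<kappa>" for n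
  proof -
    have "S - inverse (real (Suc n)) < Sup (g ` K)" unfolding S_def by simp
    then show ?thesis using less_cSupD[of "g ` K"] Kne by blast
  qed
  then obtain k where kK: "\<And>n. k n \<in> K" and kg: "\<And>n. S - inverse (real (Suc n)) < g (k n)"
    by metis
  define p where "p = (\<lambda>n. P (k n))"
  have pc: "(norm (p m - p n))\<^sup>2 \<le> 8*c*(inverse (real (Suc m)) + inverse (real (Suc n)))" for m n
  proof -
    have "(1/2::real) *\<^sub>R k m + (1/2) *\<^sub>R k n \<in> K"
      using Kc kK by (simp add: convex_def)
    then have "g ((1 - 1/2) *\<^sub>R k m + (1/2) *\<^sub>R k n) \<le> S" using gS by simp
    then have "(1/2) * g (k m) + (1/2) * g (k n) + (1/4)*(norm (p m - p n))\<^sup>2/(4*c) \<le> S"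
      unfolding seg p_def by simp
    then have "(norm (p m - p n))\<^sup>2 \<le> 8*c*((S - g (k m)) + (S - g (k n)))"
      using c by (simp add: field_simps)
    also have "\<dots> \<le> 8*c*(inverse (real (Suc m)) + inverse (real (Suc n)))"
      using kg[of m] kg[of n] c by (intro mult_left_mono) auto
    finally show ?thesis .
  qed
  have "Cauchy p"
  proof (rule CauchyI)
    fix e :: real assume e: "e > 0"
    obtain N where N: "inverse (real (Suc N)) < e\<^sup>2 / (16*c)"
      using reals_Archimedean[of "e\<^sup>2 / (16*c)"] e c by auto
    show "\<exists>M. \<forall>m\<ge>M. \<forall>n\<ge>M. norm (p m - p n) < e"
    proof (intro exI allI impI)
      fix m n assume mn: "N \<le> m" "N \<le> n"
      have im: "inverse (real (Suc m)) \<le> inverse (real (Suc N))" using mn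
        by (simp add: le_imp_inverse_le)
      have inn: "inverse (real (Suc n)) \<le> inverse (real (Suc N))" using mn
        by (simp add: le_imp_inverse_le)
      have "(norm (p m - p n))\<^sup>2 \<le> 8*c*(2 * inverse (real (Suc N)))"
        using pc[of m n] im inn c by (smt (verit) mult_left_mono)
      also have "\<dots> < e\<^sup>2" using N c by (simp add: field_simps)
      finally show "norm (p m - p n) < e"
        using e by (simp add: power2_less_imp_less)
    qed
  qed
  then obtain pb where pb: "p \<longlonglongrightarrow> pb" using Cauchy_convergent_iff convergent_def by blast
  have gk: "(\<lambda>n. g (k n)) \<longlonglongrightarrow> S"
  proof (rule tendsto_sandwich[of "\<lambda>n. S - inverse (real (Suc n))" _ _ "\<lambda>n. S"])
    show "\<forall>\<^sub>F n in sequentially. S - inverse (real (Suc n)) \<le> g (k n)"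
      using kg by (intro always_eventually allI less_imp_le) auto
    show "\<forall>\<^sub>F n in sequentially. g (k n) \<le> S" using gS kK by auto
    show "(\<lambda>n. S - inverse (real (Suc n))) \<longlonglongrightarrow> S"
      using tendsto_diff[OF tendsto_const LIMSEQ_inverse_real_of_nat, of S] by simp
  qed simp
  define xb where "xb = - (1/(2*c)) *\<^sub>R pb"
  have key: "g w + (norm (pb - P w))\<^sup>2/(4*c) \<le> S" if wW: "w \<in> W" for w
  proof -
    define D where "D = (norm (pb - P w))\<^sup>2/(4*c)"
    have D0: "D \<ge> 0" unfolding D_def using c by simp
    have t1: "g w + (1-t) * D \<le> S" if t: "0 < t" "t < 1" for t
    proof -
      have ineq: "(1-t) * g (k n) + t * g w + t*(1-t)*(norm (p n - P w))\<^sup>2/(4*c) \<le> S" for n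
      proof -
        have "(1-t) *\<^sub>R k n + t *\<^sub>R w \<in> K"
          using Kc kK[of n] WK wW t unfolding convex_def by (meson diff_ge_0_iff_ge less_imp_le subsetD diff_add_cancel)
        then show ?thesis using gS seg p_def by metis
      qed
      have lim: "(\<lambda>n. (1-t) * g (k n) + t * g w + t*(1-t)*(norm (p n - P w))\<^sup>2/(4*c))
          \<longlonglongrightarrow> (1-t) * S + t * g w + t*(1-t)*(norm (pb - P w))\<^sup>2/(4*c)"
        using c by (intro tendsto_intros gk pb) auto
      have "(1-t) * S + t * g w + t*(1-t)*(norm (pb - P w))\<^sup>2/(4*c) \<le> S"
        using LIMSEQ_le[OF lim tendsto_const] ineq by blast
      then have "t * (g w + (1-t) * D) \<le> t * S" unfolding D_def by (simp add: algebra_simps)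
      then show ?thesis using t by simp
    qed
    show ?thesis
    proof (rule ccontr)
      assume "\<not> ?thesis"
      then have pos: "g w + D - S > 0" unfolding D_def by simp
      define t where "t = min (1/2) ((g w + D - S) / (2 * (D + 1)))"
      have t0: "0 < t" "t < 1" using pos D0 by (auto simp: t_def)
      have "t * D < g w + D - S"
      proof -
        have "t * D \<le> ((g w + D - S) / (2 * (D + 1))) * D"
          using D0 by (intro mult_right_mono) (auto simp: t_def)
        also have "\<dots> = (g w + D - S) * (D / (2 * (D + 1)))" by simp
        also have "\<dots> < (g w + D - S) * 1"
          using pos D0 by (intro mult_strict_left_mono) (auto simp: field_simps)
        also have "\<dots> = g w + D - S" by simp
        finally show ?thesis .
      qed
      then show False using t1[OF t0] by (simp add: algebra_simps)
    qed
  qed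
  have "z - c *\<^sub>R xb \<in> A xb"
  proof (rule max_ext[OF mm], intro allI impI)
    fix a b assume ab: "b \<in> A a"
    define w where "w = (a, b - z, inner a (b - z))"
    have wW: "w \<in> W" using ab unfolding w_def W_def by blast
    have id: "inner (xb - a) (c *\<^sub>R xb + (b - z)) = g w + (norm (pb - P w))\<^sup>2/(4*c)"
      unfolding g_def P_def E_def w_def xb_def power2_norm_eq_inner using c
      by (simp add: inner_add_left inner_add_right inner_diff_left inner_diff_right inner_commute
          field_simps)
    have "inner (xb - a) (c *\<^sub>R xb + (b - z)) \<le> 0" using id key[OF wW] S0 by simp
    moreover have "z - c *\<^sub>R xb - b = - (c *\<^sub>R xb + (b - z))" by (simp add: algebra_simps)
    ultimately show "0 \<le> inner (xb - a) (z - c *\<^sub>R xb - b)" by (simp only: inner_minus_right)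
  qed
  then show ?thesis by blast
qed



lemma real_contr_aux:
  fixes \<mu> P I :: real
  assumes "\<mu> > 0" "P \<ge> 0" "I + \<mu> * P \<le> 0"
  shows "P + 2*I \<le> (P - 2*I) / (1+\<mu>)\<^sup>2"
proof -
  have "(1+\<mu>)\<^sup>2 * (P + 2*I) \<le> P - 2*I"
  proof -
    have "(1+\<mu>)\<^sup>2 * (P + 2*I) - (P - 2*I) = (2*\<mu> + \<mu>\<^sup>2) * P + 2*((1+\<mu>)\<^sup>2 + 1) * I"
      by (simp add: algebra_simps power2_eq_square)
    also have "\<dots> \<le> (2*\<mu> + \<mu>\<^sup>2) * P + 2*((1+\<mu>)\<^sup>2 + 1) * (- \<mu> * P)"
      using assms by (intro add_left_mono mult_left_mono) auto
    also have "\<dots> = - ((2*\<mu> + 3*\<mu>\<^sup>2 + 2*\<mu>^3) * P)"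
      by (simp add: algebra_simps power2_eq_square power3_eq_cube)
    also have "\<dots> \<le> 0"
    proof -
      have "0 \<le> (2*\<mu> + 3*\<mu>\<^sup>2 + 2*\<mu>^3) * P" using assms by (intro mult_nonneg_nonneg) auto
      then show ?thesis by linarith
    qed
    finally show ?thesis by simp
  qed
  then show ?thesis using assms(1) by (simp add: field_simps)
qed

theorem theorem2p6:
  fixes Q :: "'a::{real_inner, complete_space} \<Rightarrow> 'a set" and \<mu> :: real
  assumes "\<mu> > 0"
    and "unmonotone_mf \<mu> Q"
    and "dom_mf Q = UNIV"
    and "max_monotone_mf (neg_shift \<mu> Q)"
  shows "\<forall>M :: 'a \<Rightarrow> 'a set. max_monotone_mf M \<longrightarrow> touches M Q"
proof (intro allI impI)
  fix M :: "'a \<Rightarrow> 'a set" assume mmM: "max_monotone_mf M"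
  have mu: "\<mu> > 0" using assms(1) .
  have um: "inner (y1 - y2) (q1 - q2) + \<mu> * ((norm (y1 - y2))\<^sup>2 + (norm (q1 - q2))\<^sup>2) \<le> 0"
    if "q1 \<in> Q y1" "q2 \<in> Q y2" for y1 q1 y2 q2
    using assms(2) that unfolding unmonotone_mf_def graph_def by auto
  have mM: "inner (x1 - x2) (m1 - m2) \<ge> 0" if "m1 \<in> M x1" "m2 \<in> M x2" for x1 m1 x2 m2
    using mmM that unfolding max_monotone_mf_def monotone_mf_def graph_def by auto
  have Jex: "\<exists>x. s - x \<in> M x" for s
    using minty_gen[OF mmM, of 1 s] by simp
  have Sex: "\<exists>y q. q \<in> Q y \<and> d = y - q" for d
  proof -
    obtain y where "d - (1+\<mu>) *\<^sub>R y \<in> neg_shift \<mu> Q y"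
      using minty_gen[OF assms(4), of "1+\<mu>" d] mu by auto
    then obtain q where q: "q \<in> Q y" "d - (1+\<mu>) *\<^sub>R y = - q - \<mu> *\<^sub>R y"
      unfolding neg_shift_def by auto
    then have "d = y - q" by (simp add: algebra_simps)
    then show ?thesis using q by blast
  qed
  define J where "J s = (SOME x. s - x \<in> M x)" for s
  have J: "s - J s \<in> M (J s)" for s unfolding J_def by (rule someI_ex[OF Jex])
  define R where "R s = J s - (s - J s)" for s
  define Sm where "Sm d = (SOME s. \<exists>y q. q \<in> Q y \<and> d = y - q \<and> s = y + q)" for d
  have Sm: "\<exists>y q. q \<in> Q y \<and> d = y - q \<and> Sm d = y + q" for d
  proof -
    have "\<exists>s. \<exists>y q. q \<in> Q y \<and> d = y - q \<and> s = y + q" using Sex by blast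
    then show ?thesis unfolding Sm_def by (rule someI_ex)
  qed
  have Rne: "dist (R s1) (R s2) \<le> dist s1 s2" for s1 s2
  proof -
    define x1 x2 where "x1 = J s1" and "x2 = J s2"
    define m1 m2 where "m1 = s1 - x1" and "m2 = s2 - x2"
    have mon: "inner (x1 - x2) (m1 - m2) \<ge> 0" using mM J unfolding x1_def x2_def m1_def m2_def by blast
    have "(norm (R s1 - R s2))\<^sup>2 = (norm (s1 - s2))\<^sup>2 - 4 * inner (x1 - x2) (m1 - m2)"
      unfolding R_def x1_def[symmetric] x2_def[symmetric] power2_norm_eq_inner m1_def m2_def
      by (simp add: inner_add_left inner_add_right inner_diff_left inner_diff_right inner_commute algebra_simps)
    also have "\<dots> \<le> (norm (s1 - s2))\<^sup>2" using mon by simp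
    finally show ?thesis unfolding dist_norm by (rule power2_le_imp_le) simp
  qed
  have Sc: "dist (Sm d1) (Sm d2) \<le> (1/(1+\<mu>)) * dist d1 d2" for d1 d2
  proof -
    obtain y1 q1 where 1: "q1 \<in> Q y1" "d1 = y1 - q1" "Sm d1 = y1 + q1" using Sm by blast
    obtain y2 q2 where 2: "q2 \<in> Q y2" "d2 = y2 - q2" "Sm d2 = y2 + q2" using Sm by blast
    define P where "P = (norm (y1 - y2))\<^sup>2 + (norm (q1 - q2))\<^sup>2"
    define I where "I = inner (y1 - y2) (q1 - q2)"
    have hI: "I + \<mu> * P \<le> 0" using um[OF 1(1) 2(1)] unfolding I_def P_def .
    have P0: "P \<ge> 0" unfolding P_def by simp
    have e1: "(norm (Sm d1 - Sm d2))\<^sup>2 = P + 2*I"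
      unfolding 1(3) 2(3) P_def I_def power2_norm_eq_inner
      by (simp add: inner_add_left inner_add_right inner_diff_left inner_diff_right inner_commute algebra_simps)
    have e2: "(norm (d1 - d2))\<^sup>2 = P - 2*I"
      unfolding 1(2) 2(2) P_def I_def power2_norm_eq_inner
      by (simp add: inner_add_left inner_add_right inner_diff_left inner_diff_right inner_commute algebra_simps)
    have "(norm (Sm d1 - Sm d2))\<^sup>2 \<le> (norm (d1 - d2))\<^sup>2 / (1+\<mu>)\<^sup>2"
      unfolding e1 e2 by (rule real_contr_aux[OF mu P0 hI])
    also have "\<dots> = ((1/(1+\<mu>)) * norm (d1 - d2))\<^sup>2"
      by (simp only: power_mult_distrib power_one_over) simp
    finally have "(norm (Sm d1 - Sm d2))\<^sup>2 \<le> ((1/(1+\<mu>)) * norm (d1 - d2))\<^sup>2" .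
    then show ?thesis unfolding dist_norm
      by (rule power2_le_imp_le) (use mu in simp)
  qed
  define f where "f s = Sm (R s)" for s
  have "\<exists>!s. f s = s"
  proof (rule banach_fix_type[of "1/(1+\<mu>)"])
    show "0 \<le> 1/(1+\<mu>)" "1/(1+\<mu>) < 1" using mu by auto
    show "\<forall>x y. dist (f x) (f y) \<le> 1/(1+\<mu>) * dist x y"
    proof (intro allI)
      fix x y
      have "dist (f x) (f y) \<le> 1/(1+\<mu>) * dist (R x) (R y)" unfolding f_def by (rule Sc)
      also have "\<dots> \<le> 1/(1+\<mu>) * dist x y" using mu Rne by (intro mult_left_mono) auto
      finally show "dist (f x) (f y) \<le> 1/(1+\<mu>) * dist x y" .
    qed
  qed
  then obtain s where fs: "Sm (R s) = s" unfolding f_def by blast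
  define x where "x = J s"
  define m where "m = s - x"
  have xm: "m \<in> M x" unfolding x_def m_def by (rule J)
  obtain y q where yq: "q \<in> Q y" "R s = y - q" "Sm (R s) = y + q" using Sm by blast
  have h1: "x - m = y - q" and h2: "x + m = y + q"
  proof -
    have "x - m = R s" unfolding R_def x_def m_def by simp
    then show "x - m = y - q" using yq(2) by simp
    have "x + m = s" unfolding m_def by simp
    then show "x + m = y + q" using yq(3) fs by simp
  qed
  have "(x - m) + (x + m) = (y - q) + (y + q)" using h1 h2 by simp
  then have "2 *\<^sub>R x = 2 *\<^sub>R y" by (simp add: scaleR_2 algebra_simps)
  then have yx: "y = x" by simp
  then have qm: "q = m" using h2 by simp
  have inter: "graph M \<inter> graph Q = {(x, m)}"
  proof
    show "{(x, m)} \<subseteq> graph M \<inter> graph Q" using xm yq(1) yx qm by (auto simp: graph_def)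
    show "graph M \<inter> graph Q \<subseteq> {(x, m)}"
    proof clarify
      fix a b assume ab: "(a, b) \<in> graph M" "(a, b) \<in> graph Q"
      have bM: "b \<in> M a" and bQ: "b \<in> Q a" using ab by (auto simp: graph_def)
      have mQ: "m \<in> Q x" using yq(1) yx qm by simp
      have i1: "inner (a - x) (b - m) \<ge> 0" using mM[OF bM xm] .
      have i2: "inner (a - x) (b - m) + \<mu> * ((norm (a - x))\<^sup>2 + (norm (b - m))\<^sup>2) \<le> 0"
        using um[OF bQ mQ] .
      have "\<mu> * ((norm (a - x))\<^sup>2 + (norm (b - m))\<^sup>2) \<le> 0" using i1 i2 by linarith
      then have "(norm (a - x))\<^sup>2 + (norm (b - m))\<^sup>2 \<le> 0" using mu
        by (simp add: mult_le_0_iff)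
      then have "(norm (a - x))\<^sup>2 = 0" "(norm (b - m))\<^sup>2 = 0"
        using zero_le_power2[of "norm (a - x)"] zero_le_power2[of "norm (b - m)"] by linarith+
      then have "norm (a - x) = 0" "norm (b - m) = 0" by simp_all
      then show "a = x \<and> b = m" by simp
    qed
  qed
  then show "touches M Q" unfolding touches_def by blast
qed

end
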